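(* Let $\mathcal{H}=(V,H,\bm{w})$ be a finite, connected, weighted undirected hypergraph in which every hyperedge has at least two vertices, and let $C\in\mathbb{R}$. Suppose $\kappa(u,v)\ge C$ for every well-transported pair $\{u,v\}$. Then $\kappa(x,y)\ge C$ for all distinct $x,y\in V$.
   Context: A weighted undirected hypergraph $\mathcal{H}=(V,H,\bm{w})$ has a finite vertex set $V$, a finite set $H$ of hyperedges (subsets of $V$), and positive weights $w_h>0$. Distinct vertices $u,v$ are adjacent ($u\sim v$) if some hyperedge contains both; $\Gamma(x)=\{z: z\sim x\}$; $\mathrm{Deg}(x)=\sum_{h\ni x}w_h$. A hyperpath connecting $u$ and $v$ is a sequence of hyperedges $h_1,\dots,h_l$ with $u\in h_1$, $v\in h_l$, $h_j\cap h_{j+1}\neq\emptyset$; $\mathcal{H}$ is connected if all pairs of distinct vertices are connected by hyperpaths. For $u\ne v$, $d(u,v)=\inf_\gamma\sum_{h\in\gamma}w_h$ over hyperpaths connecting $u,v$; $d(u,u)=0$. $W(\mu,\nu)=\inf_\pi\sum_{x,y}\pi(x,y)d(x,y)$ over couplings $\pi$ of probability measures $\mu,\nu$ on $V$. For $\alpha\in[0,1]$: $\mu_x^\alpha(x)=\alpha$, $\mu_x^\alpha(z)=(1-\alpha)\sum_{h'\ni x,z}\frac{1}{|h'|-1}\frac{w_{h'}}{\mathrm{Deg}(x)}$ for $z\in\Gamma(x)$, $0$ otherwise. For distinct $u,v$: $\kappa_\alpha(u,v)=1-W(\mu_u^\alpha,\mu_v^\alpha)/d(u,v)$, and the Lin–Lu–Yau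 curvature is $\kappa(u,v)=\lim_{\alpha\to1^-}\kappa_\alpha(u,v)/(1-\alpha)$ (this limit exists in $\mathbb{R}$). A pair $\{u,v\}$ of distinct vertices is well-transported if there is a hyperedge $h$ containing both $u$ and $v$ with $d(u,v)=w_h$. *)

theory Defs
  imports "HOL-Analysis.Analysis"
begin

definition hypergraph :: "'a set \<Rightarrow> 'a set set \<Rightarrow> ('a set \<Rightarrow> real) \<Rightarrow> bool" where
  "hypergraph V H w \<longleftrightarrow> finite V \<and> finite H \<and> (\<forall>h\<in>H. h \<subseteq> V \<and> w h > 0)"

definition adj :: "'a set set \<Rightarrow> 'a \<Rightarrow> 'a \<Rightarrow> bool" where
  "adj H u v \<longleftrightarrow> u \<noteq> v \<and> (\<exists>h\<in>H. u \<in> h \<and> v \<in> h)"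

definition Deg :: "'a set set \<Rightarrow> ('a set \<Rightarrow> real) \<Rightarrow> 'a \<Rightarrow> real" where
  "Deg H w x = (\<Sum>h\<in>{h\<in>H. x \<in> h}. w h)"

definition hyperpath :: "'a set set \<Rightarrow> 'a set list \<Rightarrow> 'a \<Rightarrow> 'a \<Rightarrow> bool" where
  "hyperpath H hs u v \<longleftrightarrow> hs \<noteq> [] \<and> set hs \<subseteq> H \<and> u \<in> hd hs \<and> v \<in> last hs \<and>
     (\<forall>j. Suc j < length hs \<longrightarrow> hs ! j \<inter> hs ! Suc j \<noteq> {})"

definition hconnected :: "'a set \<Rightarrow> 'a set set \<Rightarrow> bool" where
  "hconnected V H \<longleftrightarrow> (\<forall>u\<in>V. \<forall>v\<in>V. u \<noteq> v \<longrightarrow> (\<exists>hs. hyperpath H hs u v))"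

definition hdist :: "'a set set \<Rightarrow> ('a set \<Rightarrow> real) \<Rightarrow> 'a \<Rightarrow> 'a \<Rightarrow> real" where
  "hdist H w u v = (if u = v then 0
     else Inf {sum_list (map w hs) | hs. hyperpath H hs u v})"

definition coupling :: "'a set \<Rightarrow> ('a \<Rightarrow> real) \<Rightarrow> ('a \<Rightarrow> real) \<Rightarrow> ('a \<Rightarrow> 'a \<Rightarrow> real) \<Rightarrow> bool" where
  "coupling V \<mu> \<nu> \<pi> \<longleftrightarrow> (\<forall>x y. \<pi> x y \<ge> 0) \<and> (\<forall>x y. (x \<notin> V \<or> y \<notin> V) \<longrightarrow> \<pi> x y = 0) \<and>
     (\<forall>x\<in>V. (\<Sum>y\<in>V. \<pi> x y) = \<mu> x) \<and> (\<forall>y\<in>V. (\<Sum>x\<in>V. \<pi> x y) = \<nu> y)"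

definition wasserstein :: "'a set \<Rightarrow> 'a set set \<Rightarrow> ('a set \<Rightarrow> real) \<Rightarrow> ('a \<Rightarrow> real) \<Rightarrow> ('a \<Rightarrow> real) \<Rightarrow> real" where
  "wasserstein V H w \<mu> \<nu> = Inf {(\<Sum>x\<in>V. \<Sum>y\<in>V. \<pi> x y * hdist H w x y) | \<pi>. coupling V \<mu> \<nu> \<pi>}"

definition rw_measure :: "'a set set \<Rightarrow> ('a set \<Rightarrow> real) \<Rightarrow> real \<Rightarrow> 'a \<Rightarrow> 'a \<Rightarrow> real" where
  "rw_measure H w \<alpha> x z = (if z = x then \<alpha>
     else if adj H x z then (1 - \<alpha>) * (\<Sum>h\<in>{h\<in>H. x \<in> h \<and> z \<in> h}. (1 / (real (card h) - 1)) * (w h / Deg H w x))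
     else 0)"

definition kappa_alpha :: "'a set \<Rightarrow> 'a set set \<Rightarrow> ('a set \<Rightarrow> real) \<Rightarrow> real \<Rightarrow> 'a \<Rightarrow> 'a \<Rightarrow> real" where
  "kappa_alpha V H w \<alpha> u v =
     1 - wasserstein V H w (rw_measure H w \<alpha> u) (rw_measure H w \<alpha> v) / hdist H w u v"

definition LLY_curvature :: "'a set \<Rightarrow> 'a set set \<Rightarrow> ('a set \<Rightarrow> real) \<Rightarrow> 'a \<Rightarrow> 'a \<Rightarrow> real" where
  "LLY_curvature V H w u v = Lim (at_left 1) (\<lambda>\<alpha>. kappa_alpha V H w \<alpha> u v / (1 - \<alpha>))"

definition well_transported :: "'a set set \<Rightarrow> ('a set \<Rightarrow> real) \<Rightarrow> 'a \<Rightarrow> 'a \<Rightarrow> bool" where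
  "well_transported H w u v \<longleftrightarrow> u \<noteq> v \<and> (\<exists>h\<in>H. u \<in> h \<and> v \<in> h \<and> hdist H w u v = w h)"

end

theory Submission
  imports Defs
begin

lemma hyperpath_append:
  assumes "hyperpath H p x y" "hyperpath H q y z"
  shows "hyperpath H (p @ q) x z"
proof -
  have pne: "p \<noteq> []" and qne: "q \<noteq> []" using assms unfolding hyperpath_def by auto
  have "(p @ q) ! j \<inter> (p @ q) ! Suc j \<noteq> {}" if j: "Suc j < length (p @ q)" for j
  proof (cases "Suc j < length p")
    case True
    then show ?thesis using assms(1) unfolding hyperpath_def by (auto simp: nth_append)
  next
    case False
    show ?thesis
    proof (cases "Suc j = length p")
      case True
      have "p ! j = last p" using True pne by (metis last_conv_nth diff_Suc_1)
      moreover have "q ! 0 = hd q" using qne by (simp add: hd_conv_nth)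
      ultimately have "y \<in> (p @ q) ! j" "y \<in> (p @ q) ! Suc j"
        using assms True unfolding hyperpath_def by (auto simp: nth_append)
      then show ?thesis by blast
    next
      case False2: False
      then have "j \<ge> length p" using False by auto
      then show ?thesis using assms(2) j unfolding hyperpath_def
        by (auto simp: nth_append Suc_diff_le)
    qed
  qed
  then show ?thesis using assms pne qne unfolding hyperpath_def by auto
qed

locale hg =
  fixes V :: "'a set" and H :: "'a set set" and w :: "'a set \<Rightarrow> real"
  assumes hgr: "hypergraph V H w" and conn: "hconnected V H" and card2: "\<forall>h\<in>H. card h \<ge> 2"
begin

lemma finV: "finite V" and finH: "finite H" and subV: "h \<in> H \<Longrightarrow> h \<subseteq> V"
  and wpos: "h \<in> H \<Longrightarrow> w h > 0"
  using hgr unfolding hypergraph_def by auto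

lemma sum_path_nonneg: "set hs \<subseteq> H \<Longrightarrow> sum_list (map w hs) \<ge> 0"
  by (induction hs) (auto intro: add_nonneg_nonneg less_imp_le wpos)

lemma sum_path_ge: "set hs \<subseteq> H \<Longrightarrow> m \<le> w ` H \<Longrightarrow> True" by simp

lemma sum_path_len: assumes "set hs \<subseteq> H" "\<forall>h\<in>H. m \<le> w h"
  shows "real (length hs) * m \<le> sum_list (map w hs)"
  using assms by (induction hs) (auto simp: algebra_simps)

lemma path_pos: "hyperpath H hs x y \<Longrightarrow> sum_list (map w hs) > 0"
proof -
  assume a: "hyperpath H hs x y"
  then obtain h t where "hs = h # t" "h \<in> H" "set t \<subseteq> H" unfolding hyperpath_def
    by (cases hs) auto
  then show ?thesis using wpos[of h] sum_path_nonneg[of t] by simp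
qed

lemma dist_attained:
  assumes "x \<in> V" "y \<in> V" "x \<noteq> y"
  shows "\<exists>hs. hyperpath H hs x y \<and> hdist H w x y = sum_list (map w hs) \<and>
     (\<forall>hs'. hyperpath H hs' x y \<longrightarrow> sum_list (map w hs) \<le> sum_list (map w hs'))"
proof -
  obtain p0 where p0: "hyperpath H p0 x y" using conn assms unfolding hconnected_def by blast
  then have "H \<noteq> {}" unfolding hyperpath_def by (cases p0) auto
  define m where "m = Min (w ` H)"
  have mpos: "m > 0" unfolding m_def using \<open>H \<noteq> {}\<close> finH wpos by auto
  have mle: "\<forall>h\<in>H. m \<le> w h" unfolding m_def using finH by auto
  define B where "B = sum_list (map w p0)"
  define N where "N = nat \<lceil>B / m\<rceil>"
  define F where "F = {hs. set hs \<subseteq> H \<and> length hs \<le> N} \<inter> {hs. hyperpath H hs x y}"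
  let ?f = "\<lambda>hs. sum_list (map w hs)"
  have finF: "finite F" unfolding F_def using finite_lists_length_le[OF finH] by auto
  have p0s: "set p0 \<subseteq> H" using p0 unfolding hyperpath_def by auto
  have "real (length p0) * m \<le> B" unfolding B_def by (rule sum_path_len[OF p0s mle])
  then have "real (length p0) \<le> B / m" using mpos by (simp add: field_simps)
  then have "length p0 \<le> N" unfolding N_def by linarith
  then have p0F: "p0 \<in> F" unfolding F_def using p0 p0s by auto
  define hs where "hs = arg_min_on ?f F"
  have hsF: "hs \<in> F" and hsmin: "\<And>h'. h' \<in> F \<Longrightarrow> ?f hs \<le> ?f h'"
    using arg_min_if_finite[OF finF, of ?f] p0F unfolding hs_def by (auto simp: not_less)
  have allmin: "?f hs \<le> ?f h'" if "hyperpath H h' x y" for h'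
  proof (cases "length h' \<le> N")
    case True
    then show ?thesis using that hsmin unfolding F_def hyperpath_def by auto
  next
    case False
    have s: "set h' \<subseteq> H" using that unfolding hyperpath_def by auto
    have "?f hs \<le> B" using hsmin[OF p0F] unfolding B_def .
    also have "B \<le> real N * m"
    proof -
      have "B / m \<le> real N" unfolding N_def by (rule real_nat_ceiling_ge)
      then show ?thesis using mpos by (simp add: pos_divide_le_eq)
    qed
    also have "\<dots> \<le> real (length h') * m" using False mpos by auto
    also have "\<dots> \<le> ?f h'" by (rule sum_path_len[OF s mle])
    finally show ?thesis .
  qed
  have hp: "hyperpath H hs x y" using hsF unfolding F_def by auto
  have "hdist H w x y = ?f hs" unfolding hdist_def using assms(3)
    by (auto intro!: cInf_eq_minimum hp allmin)
  then show ?thesis using hp allmin by blast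
qed

lemma hdist_nonneg: "x \<in> V \<Longrightarrow> y \<in> V \<Longrightarrow> hdist H w x y \<ge> 0"
proof (cases "x = y")
  case False
  assume xy: "x \<in> V" "y \<in> V"
  then obtain hs where "hyperpath H hs x y" "hdist H w x y = sum_list (map w hs)"
    using dist_attained[of x y] False by blast
  then show ?thesis using sum_path_nonneg[of hs] unfolding hyperpath_def by auto
qed (auto simp: hdist_def)

lemma hdist_pos: "x \<in> V \<Longrightarrow> y \<in> V \<Longrightarrow> x \<noteq> y \<Longrightarrow> hdist H w x y > 0"
  using dist_attained[of x y] path_pos by fastforce

lemma hdist_le_path: "x \<in> V \<Longrightarrow> y \<in> V \<Longrightarrow> x \<noteq> y \<Longrightarrow> hyperpath H hs x y \<Longrightarrow> hdist H w x y \<le> sum_list (map w hs)"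
  using dist_attained[of x y] by fastforce

lemma hdist_tri: assumes "x \<in> V" "y \<in> V" "z \<in> V"
  shows "hdist H w x z \<le> hdist H w x y + hdist H w y z"
proof (cases "x = z")
  case True then show ?thesis using hdist_nonneg assms by (simp add: hdist_def add_nonneg_nonneg)
next
  case xz: False
  show ?thesis
  proof (cases "x = y \<or> y = z")
    case True then show ?thesis by (auto simp: hdist_def)
  next
    case False
    obtain p where p: "hyperpath H p x y" "hdist H w x y = sum_list (map w p)"
      using dist_attained[of x y] assms False by auto
    obtain q where q: "hyperpath H q y z" "hdist H w y z = sum_list (map w q)"
      using dist_attained[of y z] assms False by auto
    have "hdist H w x z \<le> sum_list (map w (p @ q))"
      using hdist_le_path[OF assms(1,3) xz hyperpath_append[OF p(1) q(1)]] .
    then show ?thesis using p q by simp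
  qed
qed

end

context hg begin

definition pm :: "('a \<Rightarrow> real) \<Rightarrow> bool" where
  "pm \<mu> \<longleftrightarrow> (\<forall>a\<in>V. \<mu> a \<ge> 0) \<and> sum \<mu> V = 1"

definition cost :: "('a \<Rightarrow> 'a \<Rightarrow> real) \<Rightarrow> real" where
  "cost \<pi> = (\<Sum>x\<in>V. \<Sum>y\<in>V. \<pi> x y * hdist H w x y)"

lemma coupling_exists:
  assumes "pm \<mu>" "pm \<nu>"
  shows "coupling V \<mu> \<nu> (\<lambda>a b. if a \<in> V \<and> b \<in> V then \<mu> a * \<nu> b else 0)"
  using assms unfolding coupling_def pm_def
  by (auto simp: sum_distrib_left[symmetric] sum_distrib_right[symmetric])

lemma cost_nonneg: "coupling V \<mu> \<nu> \<pi> \<Longrightarrow> cost \<pi> \<ge> 0"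
  unfolding cost_def coupling_def
  by (auto intro!: sum_nonneg mult_nonneg_nonneg hdist_nonneg)

lemma W_eq: "wasserstein V H w \<mu> \<nu> = Inf (cost ` {\<pi>. coupling V \<mu> \<nu> \<pi>})"
  unfolding wasserstein_def cost_def by (simp add: image_def Setcompr_eq_image) (metis)

lemma W_le: "coupling V \<mu> \<nu> \<pi> \<Longrightarrow> wasserstein V H w \<mu> \<nu> \<le> cost \<pi>"
  unfolding W_eq
  by (rule cInf_lower) (auto intro!: bdd_belowI[of _ 0] cost_nonneg)

lemma W_ge:
  assumes "pm \<mu>" "pm \<nu>" "\<And>\<pi>. coupling V \<mu> \<nu> \<pi> \<Longrightarrow> c \<le> cost \<pi>"
  shows "c \<le> wasserstein V H w \<mu> \<nu>"
  unfolding W_eq using coupling_exists[OF assms(1,2)] assms(3)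
  by (intro cInf_greatest) auto

lemma coupling_zero_col:
  assumes "coupling V \<mu> \<nu> \<pi>" "\<nu> b = 0" "b \<in> V" "a \<in> V"
  shows "\<pi> a b = 0"
proof -
  have "(\<Sum>x\<in>V. \<pi> x b) = 0" using assms unfolding coupling_def by auto
  then show ?thesis using assms finV unfolding coupling_def
    by (subst (asm) sum_nonneg_eq_0_iff) auto
qed

lemma coupling_zero_row:
  assumes "coupling V \<mu> \<nu> \<pi>" "\<mu> a = 0" "b \<in> V" "a \<in> V"
  shows "\<pi> a b = 0"
proof -
  have "(\<Sum>y\<in>V. \<pi> a y) = 0" using assms unfolding coupling_def by auto
  then show ?thesis using assms finV unfolding coupling_def
    by (subst (asm) sum_nonneg_eq_0_iff) auto
qed

lemma glue:
  assumes c1: "coupling V \<mu> \<nu> \<pi>1" and c2: "coupling V \<nu> \<rho> \<pi>2"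
  defines "\<pi> \<equiv> (\<lambda>a c. if a \<in> V \<and> c \<in> V then (\<Sum>b\<in>V. \<pi>1 a b * \<pi>2 b c / \<nu> b) else 0)"
  shows "coupling V \<mu> \<rho> \<pi>" "cost \<pi> \<le> cost \<pi>1 + cost \<pi>2"
proof -
  have nu_nn: "\<nu> b \<ge> 0" if "b \<in> V" for b
  proof -
    have "\<nu> b = (\<Sum>a\<in>V. \<pi>1 a b)" using c1 that unfolding coupling_def by auto
    also have "\<dots> \<ge> 0" using c1 unfolding coupling_def by (auto intro: sum_nonneg)
    finally show ?thesis .
  qed
  have p1: "\<pi>1 a b / \<nu> b * \<nu> b = \<pi>1 a b" if "a \<in> V" "b \<in> V" for a b
    using coupling_zero_col[OF c1 _ that(2,1)] by (cases "\<nu> b = 0") auto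
  have p2: "\<pi>2 b c / \<nu> b * \<nu> b = \<pi>2 b c" if "c \<in> V" "b \<in> V" for c b
    using coupling_zero_row[OF c2 _ that(1,2)] by (cases "\<nu> b = 0") auto
  have nn: "\<pi> a c \<ge> 0" for a c
    unfolding \<pi>_def using c1 c2 nu_nn unfolding coupling_def
    by (auto intro!: sum_nonneg divide_nonneg_nonneg mult_nonneg_nonneg)
  have row: "(\<Sum>c\<in>V. \<pi> a c) = \<mu> a" if a: "a \<in> V" for a
  proof -
    have "(\<Sum>c\<in>V. \<pi> a c) = (\<Sum>c\<in>V. \<Sum>b\<in>V. \<pi>1 a b * \<pi>2 b c / \<nu> b)"
      unfolding \<pi>_def using a by simp
    also have "\<dots> = (\<Sum>b\<in>V. \<Sum>c\<in>V. \<pi>1 a b / \<nu> b * \<pi>2 b c)"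
      by (subst sum.swap) (simp add: algebra_simps)
    also have "\<dots> = (\<Sum>b\<in>V. \<pi>1 a b / \<nu> b * \<nu> b)"
      using c2 unfolding coupling_def by (intro sum.cong refl) (metis sum_distrib_left)
    also have "\<dots> = (\<Sum>b\<in>V. \<pi>1 a b)" using p1 a by simp
    also have "\<dots> = \<mu> a" using c1 a unfolding coupling_def by auto
    finally show ?thesis .
  qed
  have col: "(\<Sum>a\<in>V. \<pi> a c) = \<rho> c" if c: "c \<in> V" for c
  proof -
    have "(\<Sum>a\<in>V. \<pi> a c) = (\<Sum>a\<in>V. \<Sum>b\<in>V. \<pi>1 a b * \<pi>2 b c / \<nu> b)"
      unfolding \<pi>_def using c by simp
    also have "\<dots> = (\<Sum>b\<in>V. \<Sum>a\<in>V. \<pi>2 b c / \<nu> b * \<pi>1 a b)"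
      by (subst sum.swap) (simp add: algebra_simps)
    also have "\<dots> = (\<Sum>b\<in>V. \<pi>2 b c / \<nu> b * \<nu> b)"
      using c1 unfolding coupling_def by (intro sum.cong refl) (metis sum_distrib_left)
    also have "\<dots> = (\<Sum>b\<in>V. \<pi>2 b c)" using p2 c by simp
    also have "\<dots> = \<rho> c" using c2 c unfolding coupling_def by auto
    finally show ?thesis .
  qed
  show "coupling V \<mu> \<rho> \<pi>" unfolding coupling_def using nn row col
    by (auto simp: \<pi>_def)
  let ?d = "hdist H w"
  have "cost \<pi> = (\<Sum>a\<in>V. \<Sum>c\<in>V. \<Sum>b\<in>V. \<pi>1 a b * \<pi>2 b c / \<nu> b * ?d a c)"
    unfolding cost_def \<pi>_def by (simp add: sum_distrib_right)
  also have "\<dots> \<le> (\<Sum>a\<in>V. \<Sum>c\<in>V. \<Sum>b\<in>V. \<pi>1 a b * \<pi>2 b c / \<nu> b * (?d a b + ?d b c))"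
    using c1 c2 nu_nn hdist_tri unfolding coupling_def
    by (intro sum_mono mult_left_mono) (auto intro!: divide_nonneg_nonneg mult_nonneg_nonneg)
  also have "\<dots> = (\<Sum>a\<in>V. \<Sum>c\<in>V. \<Sum>b\<in>V. \<pi>1 a b * \<pi>2 b c / \<nu> b * ?d a b)
      + (\<Sum>a\<in>V. \<Sum>c\<in>V. \<Sum>b\<in>V. \<pi>1 a b * \<pi>2 b c / \<nu> b * ?d b c)"
    by (simp add: distrib_left sum.distrib)
  also have "(\<Sum>a\<in>V. \<Sum>c\<in>V. \<Sum>b\<in>V. \<pi>1 a b * \<pi>2 b c / \<nu> b * ?d a b) = cost \<pi>1"
  proof -
    have "(\<Sum>a\<in>V. \<Sum>c\<in>V. \<Sum>b\<in>V. \<pi>1 a b * \<pi>2 b c / \<nu> b * ?d a b)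
        = (\<Sum>a\<in>V. \<Sum>b\<in>V. \<Sum>c\<in>V. (\<pi>1 a b / \<nu> b * ?d a b) * \<pi>2 b c)"
      by (rule sum.cong[OF refl], subst sum.swap, simp add: algebra_simps)
    also have "\<dots> = (\<Sum>a\<in>V. \<Sum>b\<in>V. (\<pi>1 a b / \<nu> b * \<nu> b) * ?d a b)"
    proof (intro sum.cong refl)
      fix a b assume b: "b \<in> V"
      show "(\<Sum>c\<in>V. (\<pi>1 a b / \<nu> b * ?d a b) * \<pi>2 b c) = (\<pi>1 a b / \<nu> b * \<nu> b) * ?d a b"
        by (subst sum_distrib_left[symmetric]) (use c2 b in \<open>simp add: coupling_def\<close>)
    qed
    also have "\<dots> = cost \<pi>1" unfolding cost_def using p1 by simp
    finally show ?thesis .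
  qed
  also have "(\<Sum>a\<in>V. \<Sum>c\<in>V. \<Sum>b\<in>V. \<pi>1 a b * \<pi>2 b c / \<nu> b * ?d b c) = cost \<pi>2"
  proof -
    have "(\<Sum>a\<in>V. \<Sum>c\<in>V. \<Sum>b\<in>V. \<pi>1 a b * \<pi>2 b c / \<nu> b * ?d b c)
        = (\<Sum>c\<in>V. \<Sum>b\<in>V. \<Sum>a\<in>V. (\<pi>2 b c / \<nu> b * ?d b c) * \<pi>1 a b)"
      by (subst sum.swap, rule sum.cong[OF refl], subst sum.swap, simp add: algebra_simps)
    also have "\<dots> = (\<Sum>c\<in>V. \<Sum>b\<in>V. (\<pi>2 b c / \<nu> b * \<nu> b) * ?d b c)"
    proof (intro sum.cong refl)
      fix c b assume b: "b \<in> V"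
      show "(\<Sum>a\<in>V. (\<pi>2 b c / \<nu> b * ?d b c) * \<pi>1 a b) = (\<pi>2 b c / \<nu> b * \<nu> b) * ?d b c"
        by (subst sum_distrib_left[symmetric]) (use c1 b in \<open>simp add: coupling_def\<close>)
    qed
    also have "\<dots> = cost \<pi>2" unfolding cost_def using p2 by (subst sum.swap) simp
    finally show ?thesis .
  qed
  finally show "cost \<pi> \<le> cost \<pi>1 + cost \<pi>2" .
qed

lemma W_tri:
  assumes "pm \<mu>" "pm \<nu>" "pm \<rho>"
  shows "wasserstein V H w \<mu> \<rho> \<le> wasserstein V H w \<mu> \<nu> + wasserstein V H w \<nu> \<rho>"
proof -
  let ?W = "wasserstein V H w"
  have "?W \<mu> \<rho> - cost \<pi>2 \<le> ?W \<mu> \<nu>" if c2: "coupling V \<nu> \<rho> \<pi>2" for \<pi>2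
  proof (rule W_ge[OF assms(1,2)])
    fix \<pi>1 assume c1: "coupling V \<mu> \<nu> \<pi>1"
    show "?W \<mu> \<rho> - cost \<pi>2 \<le> cost \<pi>1"
      using W_le[OF glue(1)[OF c1 c2]] glue(2)[OF c1 c2] by linarith
  qed
  then have "?W \<mu> \<rho> - ?W \<mu> \<nu> \<le> cost \<pi>2" if "coupling V \<nu> \<rho> \<pi>2" for \<pi>2
    using that by force
  then have "?W \<mu> \<rho> - ?W \<mu> \<nu> \<le> ?W \<nu> \<rho>" by (intro W_ge[OF assms(2,3)])
  then show ?thesis by linarith
qed

lemma W_lip:
  assumes "pm \<mu>" "pm \<nu>" "\<And>a b. a \<in> V \<Longrightarrow> b \<in> V \<Longrightarrow> f b - f a \<le> hdist H w a b"
  shows "(\<Sum>b\<in>V. \<nu> b * f b) - (\<Sum>a\<in>V. \<mu> a * f a) \<le> wasserstein V H w \<mu> \<nu>"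
proof (rule W_ge[OF assms(1,2)])
  fix \<pi> assume c: "coupling V \<mu> \<nu> \<pi>"
  have "(\<Sum>b\<in>V. \<nu> b * f b) - (\<Sum>a\<in>V. \<mu> a * f a)
      = (\<Sum>b\<in>V. (\<Sum>a\<in>V. \<pi> a b) * f b) - (\<Sum>a\<in>V. (\<Sum>b\<in>V. \<pi> a b) * f a)"
    using c unfolding coupling_def by simp
  also have "\<dots> = (\<Sum>a\<in>V. \<Sum>b\<in>V. \<pi> a b * (f b - f a))"
    by (simp add: sum_distrib_right right_diff_distrib sum_subtractf)
       (subst sum.swap, simp)
  also have "\<dots> \<le> cost \<pi>" unfolding cost_def using c assms(3) unfolding coupling_def
    by (intro sum_mono mult_left_mono) auto
  finally show "(\<Sum>b\<in>V. \<nu> b * f b) - (\<Sum>a\<in>V. \<mu> a * f a) \<le> cost \<pi>" .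
qed

end

context hg begin

lemma rw_affine: "rw_measure H w a x z = a * (if z = x then 1 else 0) + (1 - a) * rw_measure H w 0 x z"
proof (cases "z = x")
  case False
  then show ?thesis unfolding rw_measure_def by (simp only: if_False) simp
qed (simp add: rw_measure_def)

lemma Deg_nn: "Deg H w x \<ge> 0"
  unfolding Deg_def by (rule sum_nonneg) (auto simp: less_imp_le wpos)

lemma rw0_nn: "rw_measure H w 0 x z \<ge> 0"
proof -
  have "(1 / (real (card h) - 1)) * (w h / Deg H w x) \<ge> 0" if "h \<in> H" for h
  proof -
    have "card h \<ge> 2" using card2 that by auto
    then have "real (card h) - 1 > 0" by linarith
    then show ?thesis using wpos[OF that] Deg_nn by (auto intro!: mult_nonneg_nonneg divide_nonneg_nonneg)
  qed
  then show ?thesis unfolding rw_measure_def by (auto intro!: sum_nonneg)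
qed

lemma rw0_self: "rw_measure H w 0 x x = 0"
  unfolding rw_measure_def by simp

lemma rw_out: "z \<notin> V \<Longrightarrow> x \<in> V \<Longrightarrow> rw_measure H w a x z = 0"
  unfolding rw_measure_def adj_def using subV by auto

lemma rw0_sum:
  assumes x: "x \<in> V" and ex: "\<exists>h\<in>H. x \<in> h"
  shows "sum (rw_measure H w 0 x) V = 1"
proof -
  define f where "f h = 1 / (real (card h) - 1) * (w h / Deg H w x)" for h
  have Dpos: "Deg H w x > 0"
  proof -
    obtain h where h: "h \<in> H" "x \<in> h" using ex by auto
    have "w h \<le> Deg H w x" unfolding Deg_def
      using h finH by (intro member_le_sum) (auto intro: less_imp_le wpos)
    then show ?thesis using wpos[OF h(1)] by linarith
  qed
  have eq: "rw_measure H w 0 x z = (\<Sum>h\<in>{h\<in>H. x \<in> h \<and> z \<in> h \<and> z \<noteq> x}. f h)" for z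
  proof (cases "z = x")
    case True then show ?thesis by (simp add: rw_measure_def)
  next
    case False
    have s: "{h\<in>H. x \<in> h \<and> z \<in> h \<and> z \<noteq> x} = {h\<in>H. x \<in> h \<and> z \<in> h}" using False by auto
    show ?thesis
    proof (cases "adj H x z")
      case True then show ?thesis using False by (simp only: rw_measure_def s f_def if_True if_False) simp
    next
      case nadj: False
      have e: "{h\<in>H. x \<in> h \<and> z \<in> h} = {}" using False nadj unfolding adj_def by auto
      have l: "rw_measure H w 0 x z = 0" using False nadj by (simp add: rw_measure_def)
      have r: "(\<Sum>h\<in>{h\<in>H. x \<in> h \<and> z \<in> h \<and> z \<noteq> x}. f h) = 0" unfolding s e by simp
      show ?thesis unfolding l r ..
    qed
  qed
  have "sum (rw_measure H w 0 x) V = (\<Sum>z\<in>V. \<Sum>h\<in>{h\<in>H. x \<in> h \<and> z \<in> h \<and> z \<noteq> x}. f h)"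
    using eq by simp
  also have "\<dots> = (\<Sum>h\<in>H. \<Sum>z\<in>{z\<in>V. x \<in> h \<and> z \<in> h \<and> z \<noteq> x}. f h)"
    by (rule sum.swap_restrict[OF finV finH])
  also have "\<dots> = (\<Sum>h\<in>H. if x \<in> h then w h / Deg H w x else 0)"
  proof (rule sum.cong[OF refl])
    fix h assume h: "h \<in> H"
    show "(\<Sum>z\<in>{z\<in>V. x \<in> h \<and> z \<in> h \<and> z \<noteq> x}. f h) = (if x \<in> h then w h / Deg H w x else 0)"
    proof (cases "x \<in> h")
      case True
      have fin: "finite h" using subV[OF h] finV finite_subset by auto
      have c: "card h \<ge> 2" using card2 h by auto
      have "{z\<in>V. x \<in> h \<and> z \<in> h \<and> z \<noteq> x} = h - {x}" using subV[OF h] True by auto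
      moreover have "real (card (h - {x})) = real (card h) - 1"
        using True fin c by (simp add: card_Diff_singleton of_nat_diff)
      moreover have "real (card h) - 1 \<noteq> 0" using c by linarith
      ultimately show ?thesis using True by (simp add: f_def)
    qed simp
  qed
  also have "\<dots> = (\<Sum>h\<in>{h\<in>H. x \<in> h}. w h) / Deg H w x"
    by (simp add: sum.inter_filter[OF finH, symmetric] sum_divide_distrib)
  also have "\<dots> = 1" using Dpos unfolding Deg_def by simp
  finally show ?thesis .
qed

lemma pm_rw:
  assumes x: "x \<in> V" and ex: "\<exists>h\<in>H. x \<in> h" and a: "0 \<le> a" "a \<le> 1"
  shows "pm (rw_measure H w a x)"
proof -
  have "rw_measure H w a x z \<ge> 0" for z
    using rw_affine[of a x z] rw0_nn[of x z] a by (auto intro!: add_nonneg_nonneg mult_nonneg_nonneg)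
  moreover have "sum (rw_measure H w a x) V = 1"
  proof -
    have "sum (rw_measure H w a x) V = a * (\<Sum>z\<in>V. if z = x then 1 else 0) + (1 - a) * sum (rw_measure H w 0 x) V"
    proof -
      have "sum (rw_measure H w a x) V = (\<Sum>z\<in>V. a * (if z = x then 1 else 0) + (1 - a) * rw_measure H w 0 x z)"
        by (rule sum.cong[OF refl], rule rw_affine)
      then show ?thesis by (simp add: sum.distrib sum_distrib_left[symmetric])
    qed
    also have "\<dots> = 1" using rw0_sum[OF x ex] x finV by simp
    finally show ?thesis .
  qed
  ultimately show ?thesis unfolding pm_def by auto
qed

lemma in_edge: "x \<in> V \<Longrightarrow> y \<in> V \<Longrightarrow> x \<noteq> y \<Longrightarrow> \<exists>h\<in>H. x \<in> h"
  using conn unfolding hconnected_def hyperpath_def by (metis hd_in_set subsetD)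

end

context hg begin

definition Wa where "Wa a x y = wasserstein V H w (rw_measure H w a x) (rw_measure H w a y)"
definition Df where "Df x y a = (hdist H w x y - Wa a x y) / (1 - a)"

lemma cost_lin: "cost (\<lambda>p q. s * \<pi> p q + t * \<sigma> p q) = s * cost \<pi> + t * cost \<sigma>"
  unfolding cost_def by (simp add: sum.distrib sum_distrib_left algebra_simps)

lemma D_mono:
  assumes x: "x \<in> V" and y: "y \<in> V" and xy: "x \<noteq> y" and a: "0 \<le> a" "a < b" "b < 1"
  shows "Df x y a \<le> Df x y b"
proof -
  define l where "l = (1 - b) / (1 - a)"
  have l0: "0 < l" "l < 1" using a unfolding l_def by (auto simp: field_simps)
  have l1: "l * (1 - a) = 1 - b" using a unfolding l_def by (auto simp: field_simps)
  have ex: "\<exists>h\<in>H. x \<in> h" "\<exists>h\<in>H. y \<in> h" using in_edge x y xy by metis+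
  define \<delta> where "\<delta> p q = (if p = x \<and> q = y then 1 else (0::real))" for p q
  have inner: "(\<Sum>q\<in>V. \<delta> p q * hdist H w p q) = (if p = x then hdist H w x y else 0)" for p
  proof -
    have "(\<Sum>q\<in>V. \<delta> p q * hdist H w p q) = (\<Sum>q\<in>V. if q = y then (if p = x then hdist H w x y else 0) else 0)"
      unfolding \<delta>_def by (rule sum.cong) auto
    also have "\<dots> = (if p = x then hdist H w x y else 0)" using y finV by (simp add: sum.delta')
    finally show ?thesis .
  qed
  have cd: "cost \<delta> = hdist H w x y" unfolding cost_def inner using x finV
    by (simp add: sum.delta')
  have dsum1: "(\<Sum>q\<in>V. \<delta> p q) = (if p = x then 1 else 0)" for p
  proof -
    have "(\<Sum>q\<in>V. \<delta> p q) = (\<Sum>q\<in>V. if q = y then (if p = x then 1 else 0) else 0)"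
      unfolding \<delta>_def by (rule sum.cong) auto
    also have "\<dots> = (if p = x then 1 else 0)" using y finV by (simp add: sum.delta')
    finally show ?thesis .
  qed
  have dsum2: "(\<Sum>p\<in>V. \<delta> p q) = (if q = y then 1 else 0)" for q
  proof -
    have "(\<Sum>p\<in>V. \<delta> p q) = (\<Sum>p\<in>V. if p = x then (if q = y then 1 else 0) else 0)"
      unfolding \<delta>_def by (rule sum.cong) auto
    also have "\<dots> = (if q = y then 1 else 0)" using x finV by (simp add: sum.delta')
    finally show ?thesis .
  qed
  let ?d = "hdist H w x y"
  have key: "Wa b x y \<le> l * cost \<pi> + (1 - l) * ?d" if c: "coupling V (rw_measure H w a x) (rw_measure H w a y) \<pi>" for \<pi>
  proof -
    define \<pi>' where "\<pi>' = (\<lambda>p q. l * \<pi> p q + (1 - l) * \<delta> p q)"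
    have m: "rw_measure H w b u v = l * rw_measure H w a u v + (1 - l) * (if v = u then 1 else 0)" for u v
    proof -
      have "l * rw_measure H w a u v + (1 - l) * (if v = u then 1 else 0)
          = (l * a + (1 - l)) * (if v = u then 1 else 0) + (l * (1 - a)) * rw_measure H w 0 u v"
        by (subst rw_affine) (simp add: algebra_simps)
      also have "\<dots> = b * (if v = u then 1 else 0) + (1 - b) * rw_measure H w 0 u v"
      proof -
        have "l * a + (1 - l) = b" using l1 by (simp add: algebra_simps)
        then show ?thesis by (simp only: l1)
      qed
      also have "\<dots> = rw_measure H w b u v" by (rule rw_affine[symmetric])
      finally show ?thesis by simp
    qed
    have "coupling V (rw_measure H w b x) (rw_measure H w b y) \<pi>'"
      unfolding coupling_def
    proof (intro conjI ballI allI impI)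
      fix p q show "0 \<le> \<pi>' p q" using c l0 unfolding coupling_def \<pi>'_def \<delta>_def by auto
    next
      fix p q assume "p \<notin> V \<or> q \<notin> V" then show "\<pi>' p q = 0"
        using c x y unfolding coupling_def \<pi>'_def \<delta>_def by auto
    next
      fix p assume p: "p \<in> V"
      have "(\<Sum>q\<in>V. \<pi>' p q) = l * (\<Sum>q\<in>V. \<pi> p q) + (1 - l) * (\<Sum>q\<in>V. \<delta> p q)"
        unfolding \<pi>'_def by (simp add: sum.distrib sum_distrib_left)
      also have "(\<Sum>q\<in>V. \<pi> p q) = rw_measure H w a x p" using c p unfolding coupling_def by auto
      finally show "(\<Sum>q\<in>V. \<pi>' p q) = rw_measure H w b x p"
        using m[of x p] dsum1[of p] by simp
    next
      fix q assume q: "q \<in> V"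
      have "(\<Sum>p\<in>V. \<pi>' p q) = l * (\<Sum>p\<in>V. \<pi> p q) + (1 - l) * (\<Sum>p\<in>V. \<delta> p q)"
        unfolding \<pi>'_def by (simp add: sum.distrib sum_distrib_left)
      also have "(\<Sum>p\<in>V. \<pi> p q) = rw_measure H w a y q" using c q unfolding coupling_def by auto
      finally show "(\<Sum>p\<in>V. \<pi>' p q) = rw_measure H w b y q"
        using m[of y q] dsum2[of q] by simp
    qed
    then have "Wa b x y \<le> cost \<pi>'" unfolding Wa_def by (rule W_le)
    also have "cost \<pi>' = l * cost \<pi> + (1 - l) * ?d" unfolding \<pi>'_def cost_lin cd ..
    finally show ?thesis .
  qed
  have "(Wa b x y - (1 - l) * ?d) / l \<le> wasserstein V H w (rw_measure H w a x) (rw_measure H w a y)"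
  proof (rule W_ge)
    show "pm (rw_measure H w a x)" "pm (rw_measure H w a y)" using pm_rw x y ex a by auto
    fix \<pi> assume "coupling V (rw_measure H w a x) (rw_measure H w a y) \<pi>"
    from key[OF this] show "(Wa b x y - (1 - l) * ?d) / l \<le> cost \<pi>"
      using l0 by (simp add: divide_le_eq algebra_simps)
  qed
  then have "(Wa b x y - (1 - l) * ?d) / l \<le> Wa a x y" unfolding Wa_def[of a x y] .
  then have "Wa b x y \<le> l * Wa a x y + (1 - l) * ?d" using l0 by (simp add: divide_le_eq algebra_simps)
  then have "l * (?d - Wa a x y) \<le> ?d - Wa b x y" by (simp add: algebra_simps)
  then have "l * (?d - Wa a x y) / (1 - b) \<le> (?d - Wa b x y) / (1 - b)"
    using a by (intro divide_right_mono) auto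
  moreover have "l * (?d - Wa a x y) / (1 - b) = (?d - Wa a x y) / (1 - a)"
  proof -
    have gen: "l * X / (1 - b) = X / (1 - a)" for X :: real
    proof -
      have na: "1 - a \<noteq> 0" and nb: "1 - b \<noteq> 0" using a by auto
      show ?thesis unfolding l_def using a by simp
    qed
    show ?thesis by (rule gen)
  qed
  ultimately show ?thesis unfolding Df_def by simp
qed

end

context hg begin

lemma ev01: "eventually (\<lambda>a. a \<in> {0<..<1}) (at_left (1::real))"
  by (rule eventually_at_left_real) simp

definition M where "M x = (\<Sum>z\<in>V. rw_measure H w 0 x z * hdist H w x z)"

lemma D_bound:
  assumes x: "x \<in> V" and y: "y \<in> V" and xy: "x \<noteq> y" and a: "0 \<le> a" "a < 1"
  shows "Df x y a \<le> hdist H w x y + M x"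
proof -
  have ex: "\<exists>h\<in>H. x \<in> h" "\<exists>h\<in>H. y \<in> h" using in_edge x y xy by metis+
  let ?\<mu> = "rw_measure H w a x" and ?\<nu> = "rw_measure H w a y" and ?d = "hdist H w"
  have pmx: "pm ?\<mu>" and pmy: "pm ?\<nu>" using pm_rw ex x y a by auto
  have lip: "(\<Sum>q\<in>V. ?\<nu> q * ?d x q) - (\<Sum>p\<in>V. ?\<mu> p * ?d x p) \<le> Wa a x y"
    unfolding Wa_def
  proof (rule W_lip[OF pmx pmy])
    fix p q assume p: "p \<in> V" and q: "q \<in> V"
    from hdist_tri[OF x p q] show "?d x q - ?d x p \<le> ?d p q" by linarith
  qed
  have nuy: "?\<nu> y = a" using rw_affine[of a y y] rw0_self[of y] by simp
  have s1': "?\<nu> y * ?d x y \<le> (\<Sum>q\<in>V. ?\<nu> q * ?d x q)"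
  proof (rule member_le_sum[OF y _ finV])
    fix q assume q: "q \<in> V - {y}"
    have "?\<nu> q \<ge> 0" using pmy q unfolding pm_def by auto
    moreover have "?d x q \<ge> 0" using hdist_nonneg[OF x] q by auto
    ultimately show "0 \<le> ?\<nu> q * ?d x q" by simp
  qed
  have s1: "a * ?d x y \<le> (\<Sum>q\<in>V. ?\<nu> q * ?d x q)" using s1' nuy by simp
  have "(\<Sum>p\<in>V. ?\<mu> p * ?d x p) = (\<Sum>p\<in>V. a * ((if p = x then 1 else 0) * ?d x p) + (1 - a) * (rw_measure H w 0 x p * ?d x p))"
    by (rule sum.cong[OF refl], subst rw_affine) (simp add: algebra_simps)
  also have "\<dots> = a * (\<Sum>p\<in>V. (if p = x then 1 else 0) * ?d x p) + (1 - a) * M x"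
    unfolding M_def by (simp add: sum.distrib sum_distrib_left)
  also have "(\<Sum>p\<in>V. (if p = x then 1 else 0) * ?d x p) = 0"
  proof (rule sum.neutral, rule ballI)
    fix p assume "p \<in> V"
    show "(if p = x then 1 else 0) * ?d x p = 0"
    proof (cases "p = x")
      case True then show ?thesis unfolding hdist_def by simp
    qed simp
  qed
  finally have s2: "(\<Sum>p\<in>V. ?\<mu> p * ?d x p) = (1 - a) * M x" by simp
  have "a * ?d x y - (1 - a) * M x \<le> Wa a x y" using lip s1 s2 by linarith
  then have "?d x y - Wa a x y \<le> (1 - a) * (?d x y + M x)" by (simp add: algebra_simps)
  then show ?thesis unfolding Df_def using a by (simp add: pos_divide_le_eq mult.commute)
qed

lemma D_lim:
  assumes x: "x \<in> V" and y: "y \<in> V" and xy: "x \<noteq> y"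
  shows "(Df x y \<longlongrightarrow> (SUP a\<in>{0..<1}. Df x y a)) (at_left 1)"
proof -
  let ?S = "SUP a\<in>{0..<1}. Df x y a"
  have bdd: "bdd_above (Df x y ` {0..<1})"
    using D_bound[OF x y xy] by (intro bdd_aboveI[of _ "hdist H w x y + M x"]) auto
  have ne: "{0..<1::real} \<noteq> {}" by auto
  show ?thesis
  proof (rule order_tendstoI)
    fix c assume "c < ?S"
    then obtain a0 where a0: "a0 \<in> {0..<1}" "c < Df x y a0"
      using less_cSUP_iff[OF ne bdd] by auto
    show "\<forall>\<^sub>F a in at_left 1. c < Df x y a"
      proof -
      have ev: "eventually (\<lambda>a. a \<in> {a0<..<1}) (at_left (1::real))"
        by (rule eventually_at_left_real) (use a0 in auto)
      show ?thesis using ev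
    proof (elim eventually_mono)
      fix a assume "a \<in> {a0<..<1}"
      then show "c < Df x y a" using D_mono[OF x y xy, of a0 a] a0 by auto
    qed
    qed
  next
    fix c assume c: "?S < c"
    show "\<forall>\<^sub>F a in at_left 1. Df x y a < c"
      using ev01
    proof (elim eventually_mono)
      fix a assume "a \<in> {0<..<(1::real)}"
      then have "Df x y a \<le> ?S" by (intro cSUP_upper[OF _ bdd]) auto
      then show "Df x y a < c" using c by linarith
    qed
  qed
qed

definition Kf where "Kf x y = Lim (at_left 1) (Df x y)"

lemma K_lim: "x \<in> V \<Longrightarrow> y \<in> V \<Longrightarrow> x \<noteq> y \<Longrightarrow> (Df x y \<longlongrightarrow> Kf x y) (at_left 1)"
  unfolding Kf_def using D_lim tendsto_Lim[OF trivial_limit_at_left_real] by metis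

lemma LLY_eq:
  assumes x: "x \<in> V" and y: "y \<in> V" and xy: "x \<noteq> y"
  shows "LLY_curvature V H w x y = Kf x y / hdist H w x y"
proof -
  have dpos: "hdist H w x y > 0" using hdist_pos x y xy by auto
  have t: "((\<lambda>a. Df x y a / hdist H w x y) \<longlongrightarrow> Kf x y / hdist H w x y) (at_left 1)"
    by (intro tendsto_divide K_lim[OF x y xy] tendsto_const) (use dpos in auto)
  have ev: "\<forall>\<^sub>F a in at_left 1. Df x y a / hdist H w x y = kappa_alpha V H w a x y / (1 - a)"
    using ev01
  proof (elim eventually_mono)
    fix a :: real assume "a \<in> {0<..<1}"
    then have "1 - a \<noteq> 0" by auto
    then show "Df x y a / hdist H w x y = kappa_alpha V H w a x y / (1 - a)"
      unfolding Df_def kappa_alpha_def Wa_def using dpos by (simp add: field_simps)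
  qed
  have "((\<lambda>a. kappa_alpha V H w a x y / (1 - a)) \<longlongrightarrow> Kf x y / hdist H w x y) (at_left 1)"
    by (rule Lim_transform_eventually[OF t ev])
  then show ?thesis unfolding LLY_curvature_def by (rule tendsto_Lim[OF trivial_limit_at_left_real])
qed

lemma K_super:
  assumes x: "x \<in> V" and y: "y \<in> V" and z: "z \<in> V" and d: "x \<noteq> z" "z \<noteq> y" "x \<noteq> y"
    and eq: "hdist H w x y = hdist H w x z + hdist H w z y"
  shows "Kf x z + Kf z y \<le> Kf x y"
proof (rule tendsto_le[OF trivial_limit_at_left_real K_lim[OF x y d(3)] tendsto_add[OF K_lim[OF x z d(1)] K_lim[OF z y d(2)]]])
  show "\<forall>\<^sub>F a in at_left 1. Df x z a + Df z y a \<le> Df x y a"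
    using ev01
  proof (elim eventually_mono)
    fix a :: real assume a: "a \<in> {0<..<1}"
    have ex: "\<exists>h\<in>H. x \<in> h" "\<exists>h\<in>H. y \<in> h" "\<exists>h\<in>H. z \<in> h" using in_edge x y z d by metis+
    have "Wa a x y \<le> Wa a x z + Wa a z y" unfolding Wa_def
      by (rule W_tri) (use pm_rw ex x y z a in auto)
    then have "(hdist H w x z - Wa a x z) + (hdist H w z y - Wa a z y) \<le> hdist H w x y - Wa a x y"
      using eq by linarith
    then have "((hdist H w x z - Wa a x z) + (hdist H w z y - Wa a z y)) / (1 - a) \<le> (hdist H w x y - Wa a x y) / (1 - a)"
      using a by (intro divide_right_mono) auto
    then show "Df x z a + Df z y a \<le> Df x y a" unfolding Df_def by (simp add: add_divide_distrib)
  qed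
qed

lemma K_wt:
  assumes x: "x \<in> V" and y: "y \<in> V" and xy: "x \<noteq> y" and c: "C \<le> LLY_curvature V H w x y"
  shows "C * hdist H w x y \<le> Kf x y"
  using c LLY_eq[OF x y xy] hdist_pos[OF x y xy] by (simp add: le_divide_eq)

lemma main_ind:
  assumes hyp: "\<forall>u\<in>V. \<forall>v\<in>V. well_transported H w u v \<longrightarrow> LLY_curvature V H w u v \<ge> C"
  shows "hyperpath H hs x y \<Longrightarrow> x \<in> V \<Longrightarrow> y \<in> V \<Longrightarrow> x \<noteq> y \<Longrightarrow>
    hdist H w x y = sum_list (map w hs) \<Longrightarrow> C * hdist H w x y \<le> Kf x y"
proof (induction hs arbitrary: x)
  case Nil
  then show ?case unfolding hyperpath_def by auto
next
  case (Cons h t)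
  have hH: "h \<in> H" and xh: "x \<in> h" using Cons.prems(1) unfolding hyperpath_def by auto
  show ?case
  proof (cases "t = []")
    case True
    then have "y \<in> h" using Cons.prems(1) unfolding hyperpath_def by auto
    then have "well_transported H w x y"
      unfolding well_transported_def using Cons.prems True hH xh by auto
    then have "C \<le> LLY_curvature V H w x y" using hyp Cons.prems(2,3) by blast
    then show ?thesis using K_wt[OF Cons.prems(2,3,4)] by blast
  next
    case tne: False
    have all: "\<forall>j. Suc j < length (h # t) \<longrightarrow> (h # t) ! j \<inter> (h # t) ! Suc j \<noteq> {}"
      using Cons.prems(1) unfolding hyperpath_def by blast
    have "Suc 0 < length (h # t)" using tne by (cases t) auto
    with all have "(h # t) ! 0 \<inter> (h # t) ! Suc 0 \<noteq> {}" by blast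
    then obtain z where zh: "z \<in> h" and zt: "z \<in> hd t" using tne by (cases t) auto
    have zV: "z \<in> V" using subV[OF hH] zh by auto
    have pt: "hyperpath H t z y"
      unfolding hyperpath_def
    proof (intro conjI allI impI)
      show "t \<noteq> []" "z \<in> hd t" by fact+
      show "set t \<subseteq> H" using Cons.prems(1) unfolding hyperpath_def by auto
      show "y \<in> last t" using Cons.prems(1) tne unfolding hyperpath_def by auto
      fix j assume "Suc j < length t"
      then have "Suc (Suc j) < length (h # t)" by simp
      then have "(h # t) ! Suc j \<inter> (h # t) ! Suc (Suc j) \<noteq> {}"
        using Cons.prems(1) unfolding hyperpath_def by blast
      then show "t ! j \<inter> t ! Suc j \<noteq> {}" by simp
    qed
    have ph: "hyperpath H [h] x z" unfolding hyperpath_def using hH xh zh by auto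
    have sumeq: "hdist H w x y = w h + sum_list (map w t)" using Cons.prems(5) by simp
    have tpos: "sum_list (map w t) > 0" by (rule path_pos[OF pt])
    have hpos: "w h > 0" by (rule wpos[OF hH])
    have zx: "z \<noteq> x"
    proof
      assume "z = x"
      then have "hdist H w x y \<le> sum_list (map w t)"
        using hdist_le_path[OF Cons.prems(2,3,4)] pt by auto
      then show False using sumeq hpos by linarith
    qed
    have zy: "z \<noteq> y"
    proof
      assume "z = y"
      then have "hyperpath H [h] x y" using ph by simp
      then have "hdist H w x y \<le> sum_list (map w [h])" by (rule hdist_le_path[OF Cons.prems(2,3,4)])
      then have "hdist H w x y \<le> w h" by simp
      then show False using sumeq tpos by linarith
    qed
    have d1: "hdist H w x z \<le> w h" using hdist_le_path[OF Cons.prems(2) zV zx[symmetric] ph] by simp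
    have d2: "hdist H w z y \<le> sum_list (map w t)" using hdist_le_path[OF zV Cons.prems(3) zy pt] .
    have tri: "hdist H w x y \<le> hdist H w x z + hdist H w z y"
      using hdist_tri[OF Cons.prems(2) zV Cons.prems(3)] .
    have e1: "hdist H w x z = w h" and e2: "hdist H w z y = sum_list (map w t)"
      using d1 d2 tri sumeq by linarith+
    have IH: "C * hdist H w z y \<le> Kf z y"
      using Cons.IH[OF pt zV Cons.prems(3) zy e2] .
    have wt: "well_transported H w x z"
      unfolding well_transported_def using zx hH xh zh e1 by auto
    have K1: "C * hdist H w x z \<le> Kf x z"
      using hyp Cons.prems(2) zV wt K_wt zx by metis
    have "Kf x z + Kf z y \<le> Kf x y"
      using K_super[OF Cons.prems(2,3) zV zx[symmetric] zy Cons.prems(4)] e1 e2 sumeq by linarith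
    then show ?thesis using IH K1 e1 e2 sumeq by (simp add: algebra_simps)
  qed
qed

end

theorem mainTheorem3:
  fixes V :: "'a set" and H :: "'a set set" and w :: "'a set \<Rightarrow> real" and C :: real
  assumes "hypergraph V H w"
    and "hconnected V H"
    and "\<forall>h\<in>H. card h \<ge> 2"
    and "\<forall>u\<in>V. \<forall>v\<in>V. well_transported H w u v \<longrightarrow> LLY_curvature V H w u v \<ge> C"
  shows "\<forall>x\<in>V. \<forall>y\<in>V. x \<noteq> y \<longrightarrow> LLY_curvature V H w x y \<ge> C"
proof (intro ballI impI)
  interpret hg V H w using assms(1-3) by unfold_locales
  fix x y assume x: "x \<in> V" and y: "y \<in> V" and xy: "x \<noteq> y"
  obtain hs where hs: "hyperpath H hs x y" "hdist H w x y = sum_list (map w hs)"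
    using dist_attained[OF x y xy] by blast
  have "C * hdist H w x y \<le> Kf x y" by (rule main_ind[OF assms(4) hs(1) x y xy hs(2)])
  then show "C \<le> LLY_curvature V H w x y"
    using LLY_eq[OF x y xy] hdist_pos[OF x y xy] by (simp add: le_divide_eq)
qed

end
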